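(* Let $\eta>0$ and let $F$ be the (possibly defective) distribution function of a random variable $V$ with values in $(0,+\infty]$, admitting a density $f$ on $(0,\infty)$ and hazard function $h(t)=f(t)/(1-F(t))$ for $t>0$, and suppose that $\int_0^\infty h(t)\,\mathrm{d}t<1$. Construct random times $0<T_1<T_2<\cdots$ as follows. At time $0$, draw $V^{(0)}_0\sim\mathrm{Exponential}(\eta)$ and set $T_1=V^{(0)}_0$. Recursively, for $i\ge 1$, given $T_1,\dots,T_i$ and independently of everything drawn previously, draw mutually independent random variables $V^{(i)}_0\sim \mathrm{Exponential}(\eta)$ and, for each $j=1,\dots,i$, $V^{(i)}_j$ with the law of $V-(T_i-T_j)$ conditional on $V\ge T_i-T_j$, where $V\sim F$; then set $W_i=\min_{0\le j\le i}V^{(i)}_j$ and $T_{i+1}=T_i+W_i$. Let $N$ be the point process on $\mathbb{R}_+$ with atoms at the times $T_1,T_2,\dots$, i.e. $N(A)=\sum_{i\ge1}\mathbf{1}_{\{T_i\in A\}}$. Then $N$ has conditional intensity $$\lambda(t)=\eta+\int_{-\infty}^{t}h(t-s)\,N(\mathrm{d}s)=\eta+\sum_{T_j<t}h(t-T_j),$$ i.e. $N$ is a Hawkes process with baseline intensity $\eta$ and excitation function $h$.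
   Context: For a simple point process on $\mathbb{R}_+$ with event times $T_1<T_2<\cdots$ (and $T_0=0$), its conditional intensity is defined piecewise: for $T_{i}<t\le T_{i+1}$, $\lambda(t)=f_{i+1}(t\mid\mathcal{H}_t)/S_{i+1}(t\mid\mathcal{H}_t)$, where $f_{i+1}(\cdot\mid\mathcal{H}_t)$ is the conditional density of the next event time $T_{i+1}$ given the history (the previous event times $T_1,\dots,T_i$) and $S_{i+1}(t\mid\mathcal{H}_t)=1-\int_{T_i}^t f_{i+1}(s\mid\mathcal{H}_t)\,\mathrm{d}s$ is the associated survival function; that is, between events, $\lambda$ is the hazard function of the next event time given the past. A Hawkes process with baseline $\eta>0$ and excitation function $h\ge0$ is a point process with conditional intensity $\lambda(t)=\eta+\sum_{T_j<t}h(t-T_j)$. A distribution $F$ is called defective if $\lim_{t\to\infty}F(t)<1$ (positive mass at $+\infty$). *)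

theory Defs
  imports "HOL-Probability.Probability"
begin

text \<open>Law of V - c conditional on V \<ge> c, where V has law mu (a measure on ereal,
  values in (0,+\<infinity>]).\<close>
definition cond_excess :: "ereal measure \<Rightarrow> real \<Rightarrow> ereal measure" where
  "cond_excess mu c = distr (uniform_measure mu {ereal c..}) borel (\<lambda>v. v - ereal c)"

definition last_time :: "real list \<Rightarrow> real" where
  "last_time ts = (if ts = [] then 0 else last ts)"

text \<open>The construction: given the history ts = [T_1,...,T_i], the next event time is
  T_{i+1} = T_i + min_{0\<le>j\<le>i} V^(i)_j with V^(i)_0 ~ Exp(eta) and
  V^(i)_j ~ law of V - (T_i - T_j) given V \<ge> T_i - T_j, all mutually independent.
  This is the conditional law of T_{i+1} given T_1,...,T_i.\<close>
definition next_time_law :: "ereal measure \<Rightarrow> real \<Rightarrow> real list \<Rightarrow> ereal measure" where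
  "next_time_law mu eta ts =
     (let l = last_time ts; n = length ts in
      distr (PiM {0..n} (\<lambda>j. if j = 0
                              then distr (density lborel (exponential_density eta)) borel ereal
                              else cond_excess mu (l - ts ! (j - 1))))
            borel (\<lambda>\<omega>. ereal l + Min (\<omega> ` {0..n})))"

end

theory Submission
  imports Defs "HOL-Real_Asymp.Real_Asymp"
begin


lemma fub:
  fixes a b :: "real \<Rightarrow> ennreal"
  assumes [measurable]: "a \<in> borel_measurable borel" "b \<in> borel_measurable borel"
  shows "(\<integral>\<^sup>+s. a s * indicator {0<..w} s \<partial>lborel) * (\<integral>\<^sup>+r. b r * indicator {0<..w} r \<partial>lborel) =
   (\<integral>\<^sup>+s. a s * indicator {0<..w} s * (\<integral>\<^sup>+r. b r * indicator {0<..s} r \<partial>lborel) \<partial>lborel) +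
   (\<integral>\<^sup>+r. b r * indicator {0<..w} r * (\<integral>\<^sup>+s. a s * indicator {0<..r} s \<partial>lborel) \<partial>lborel)"
proof -
  have "(\<integral>\<^sup>+s. a s * indicator {0<..w} s \<partial>lborel) * (\<integral>\<^sup>+r. b r * indicator {0<..w} r \<partial>lborel)
     = (\<integral>\<^sup>+s. \<integral>\<^sup>+r. a s * indicator {0<..w} s * (b r * indicator {0<..w} r) \<partial>lborel \<partial>lborel)"
    by (subst nn_integral_multc[symmetric]) (auto simp: nn_integral_cmult)
  also have "\<dots> = (\<integral>\<^sup>+s. \<integral>\<^sup>+r. a s * indicator {0<..w} s * (b r * (if 0 < r \<and> r \<le> s then 1 else 0))
        + b r * indicator {0<..w} r * (a s * (if 0 < s \<and> s < r then 1 else 0)) \<partial>lborel \<partial>lborel)"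
    by (intro nn_integral_cong) (auto simp: indicator_def mult.commute)
  also have "\<dots> = (\<integral>\<^sup>+s. (\<integral>\<^sup>+r. a s * indicator {0<..w} s * (b r * (if 0 < r \<and> r \<le> s then 1 else 0)) \<partial>lborel)
        + (\<integral>\<^sup>+r. b r * indicator {0<..w} r * (a s * (if 0 < s \<and> s < r then 1 else 0)) \<partial>lborel) \<partial>lborel)"
    by (intro nn_integral_cong nn_integral_add) auto
  also have "\<dots> = (\<integral>\<^sup>+s. (\<integral>\<^sup>+r. a s * indicator {0<..w} s * (b r * (if 0 < r \<and> r \<le> s then 1 else 0)) \<partial>lborel) \<partial>lborel)
        + (\<integral>\<^sup>+s. (\<integral>\<^sup>+r. b r * indicator {0<..w} r * (a s * (if 0 < s \<and> s < r then 1 else 0)) \<partial>lborel) \<partial>lborel)"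
    by (intro nn_integral_add) auto
  also have "(\<integral>\<^sup>+s. (\<integral>\<^sup>+r. b r * indicator {0<..w} r * (a s * (if 0 < s \<and> s < r then 1 else 0)) \<partial>lborel) \<partial>lborel)
     = (\<integral>\<^sup>+r. (\<integral>\<^sup>+s. b r * indicator {0<..w} r * (a s * (if 0 < s \<and> s < r then 1 else 0)) \<partial>lborel) \<partial>lborel)"
    by (subst lborel_pair.Fubini') (auto simp: case_prod_unfold)
  also have "\<dots> = (\<integral>\<^sup>+r. b r * indicator {0<..w} r * (\<integral>\<^sup>+s. a s * (if 0 < s \<and> s < r then 1 else 0) \<partial>lborel) \<partial>lborel)"
    by (intro nn_integral_cong) (auto simp: nn_integral_cmult)
  also have "\<dots> = (\<integral>\<^sup>+r. b r * indicator {0<..w} r * (\<integral>\<^sup>+s. a s * indicator {0<..r} s \<partial>lborel) \<partial>lborel)"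
  proof -
    have *: "(\<integral>\<^sup>+s. a s * (if 0 < s \<and> s < r then 1 else 0) \<partial>lborel) = (\<integral>\<^sup>+s. a s * indicator {0<..r} s \<partial>lborel)" for r :: real
      by (intro nn_integral_cong_AE eventually_mono[OF AE_lborel_singleton[of r]])
         (auto simp: indicator_def)
    show ?thesis by (simp only: *)
  qed
  also have "(\<integral>\<^sup>+s. (\<integral>\<^sup>+r. a s * indicator {0<..w} s * (b r * (if 0 < r \<and> r \<le> s then 1 else 0)) \<partial>lborel) \<partial>lborel)
     = (\<integral>\<^sup>+s. a s * indicator {0<..w} s * (\<integral>\<^sup>+r. b r * indicator {0<..s} r \<partial>lborel) \<partial>lborel)"
  proof -
    have **: "(\<integral>\<^sup>+r. b r * (if 0 < r \<and> r \<le> s then 1 else 0) \<partial>lborel) = (\<integral>\<^sup>+r. b r * indicator {0<..s} r \<partial>lborel)" for s :: real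
      by (intro nn_integral_cong) (auto simp: indicator_def)
    show ?thesis by (intro nn_integral_cong, subst nn_integral_cmult, measurable, simp only: **)
  qed
  finally show ?thesis .
qed



lemma ennreal_eq_from_sum:
  fixes X :: ennreal
  assumes "ennreal p + ennreal q = X + ennreal c" "0 \<le> c" "0 \<le> p" "0 \<le> q"
  shows "X = ennreal (p + q - c)"
proof -
  have "X \<noteq> \<infinity>"
  proof
    assume "X = \<infinity>"
    with assms(1) have "ennreal (p + q) = \<infinity>" using assms by (simp add: ennreal_plus)
    then show False by simp
  qed
  then obtain x where x: "X = ennreal x" "0 \<le> x" by (cases X) auto
  have "ennreal (p + q) = ennreal (x + c)" using assms x by (simp add: ennreal_plus)
  then have "p + q = x + c" using assms x by (subst (asm) ennreal_inj) auto
  then show ?thesis using x by simp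
qed

lemma two_factor:
  fixes a b A B :: "real \<Rightarrow> real"
  assumes [measurable]: "a \<in> borel_measurable borel" "b \<in> borel_measurable borel"
    "A \<in> borel_measurable borel" "B \<in> borel_measurable borel"
    and a0: "\<And>s. 0 \<le> a s" and b0: "\<And>s. 0 \<le> b s"
    and A0: "\<And>w. 0 \<le> A w" and A1: "\<And>w. A w \<le> 1"
    and B0: "\<And>w. 0 \<le> B w" and B1: "\<And>w. B w \<le> 1"
    and Aint: "\<And>w. (\<integral>\<^sup>+s. ennreal (a s) * indicator {0<..w} s \<partial>lborel) = ennreal (1 - A w)"
    and Bint: "\<And>w. (\<integral>\<^sup>+s. ennreal (b s) * indicator {0<..w} s \<partial>lborel) = ennreal (1 - B w)"
  shows "(\<integral>\<^sup>+s. ennreal (a s * B s + A s * b s) * indicator {0<..w} s \<partial>lborel) = ennreal (1 - A w * B w)"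
proof -
  let ?I = "indicator {0<..w} :: real \<Rightarrow> ennreal"
  have pa: "ennreal (a s) * ?I s = ennreal (a s * B s) * ?I s +
      ennreal (a s) * ?I s * (\<integral>\<^sup>+r. ennreal (b r) * indicator {0<..s} r \<partial>lborel)" for s
  proof -
    have "ennreal (a s) = ennreal (a s * B s + a s * (1 - B s))" by (simp add: algebra_simps)
    also have "\<dots> = ennreal (a s * B s) + ennreal (a s * (1 - B s))"
      using a0[of s] B0[of s] B1[of s] by (intro ennreal_plus) auto
    also have "ennreal (a s * (1 - B s)) = ennreal (a s) * ennreal (1 - B s)"
      using a0[of s] B1[of s] by (intro ennreal_mult) auto
    finally have E: "ennreal (a s) = ennreal (a s * B s) + ennreal (a s) * ennreal (1 - B s)" .
    show ?thesis unfolding Bint by (subst E, simp only: distrib_right, simp only: mult_ac)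
  qed
  have pb: "ennreal (b s) * ?I s = ennreal (A s * b s) * ?I s +
      ennreal (b s) * ?I s * (\<integral>\<^sup>+r. ennreal (a r) * indicator {0<..s} r \<partial>lborel)" for s
  proof -
    have "ennreal (b s) = ennreal (A s * b s + b s * (1 - A s))" by (simp add: algebra_simps)
    also have "\<dots> = ennreal (A s * b s) + ennreal (b s * (1 - A s))"
      using b0[of s] A0[of s] A1[of s] by (intro ennreal_plus) auto
    also have "ennreal (b s * (1 - A s)) = ennreal (b s) * ennreal (1 - A s)"
      using b0[of s] A1[of s] by (intro ennreal_mult) auto
    finally have E: "ennreal (b s) = ennreal (A s * b s) + ennreal (b s) * ennreal (1 - A s)" .
    show ?thesis unfolding Aint by (subst E, simp only: distrib_right, simp only: mult_ac)
  qed
  have ia: "ennreal (1 - A w) = (\<integral>\<^sup>+s. ennreal (a s * B s) * ?I s \<partial>lborel) +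
      (\<integral>\<^sup>+s. ennreal (a s) * ?I s * (\<integral>\<^sup>+r. ennreal (b r) * indicator {0<..s} r \<partial>lborel) \<partial>lborel)"
  proof -
    have "ennreal (1 - A w) = (\<integral>\<^sup>+s. ennreal (a s) * ?I s \<partial>lborel)" by (simp add: Aint)
    also have "\<dots> = (\<integral>\<^sup>+s. ennreal (a s * B s) * ?I s + ennreal (a s) * ?I s * (\<integral>\<^sup>+r. ennreal (b r) * indicator {0<..s} r \<partial>lborel) \<partial>lborel)"
      by (rule nn_integral_cong) (rule pa)
    also have "\<dots> = (\<integral>\<^sup>+s. ennreal (a s * B s) * ?I s \<partial>lborel) + (\<integral>\<^sup>+s. ennreal (a s) * ?I s * (\<integral>\<^sup>+r. ennreal (b r) * indicator {0<..s} r \<partial>lborel) \<partial>lborel)"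
      by (rule nn_integral_add; (simp only: Bint)?; measurable)
    finally show ?thesis .
  qed
  have ib: "ennreal (1 - B w) = (\<integral>\<^sup>+s. ennreal (A s * b s) * ?I s \<partial>lborel) +
      (\<integral>\<^sup>+s. ennreal (b s) * ?I s * (\<integral>\<^sup>+r. ennreal (a r) * indicator {0<..s} r \<partial>lborel) \<partial>lborel)"
  proof -
    have "ennreal (1 - B w) = (\<integral>\<^sup>+s. ennreal (b s) * ?I s \<partial>lborel)" by (simp add: Bint)
    also have "\<dots> = (\<integral>\<^sup>+s. ennreal (A s * b s) * ?I s + ennreal (b s) * ?I s * (\<integral>\<^sup>+r. ennreal (a r) * indicator {0<..s} r \<partial>lborel) \<partial>lborel)"
      by (rule nn_integral_cong) (rule pb)
    also have "\<dots> = (\<integral>\<^sup>+s. ennreal (A s * b s) * ?I s \<partial>lborel) + (\<integral>\<^sup>+s. ennreal (b s) * ?I s * (\<integral>\<^sup>+r. ennreal (a r) * indicator {0<..s} r \<partial>lborel) \<partial>lborel)"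
      by (rule nn_integral_add; (simp only: Aint)?; measurable)
    finally show ?thesis .
  qed
  have f: "ennreal (1 - A w) * ennreal (1 - B w) =
      (\<integral>\<^sup>+s. ennreal (a s) * ?I s * (\<integral>\<^sup>+r. ennreal (b r) * indicator {0<..s} r \<partial>lborel) \<partial>lborel) +
      (\<integral>\<^sup>+s. ennreal (b s) * ?I s * (\<integral>\<^sup>+r. ennreal (a r) * indicator {0<..s} r \<partial>lborel) \<partial>lborel)"
    unfolding Aint[symmetric] Bint[symmetric] by (rule fub) auto
  have sum: "(\<integral>\<^sup>+s. ennreal (a s * B s + A s * b s) * ?I s \<partial>lborel) =
     (\<integral>\<^sup>+s. ennreal (a s * B s) * ?I s \<partial>lborel) + (\<integral>\<^sup>+s. ennreal (A s * b s) * ?I s \<partial>lborel)"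
  proof -
    have "(\<integral>\<^sup>+s. ennreal (a s * B s + A s * b s) * ?I s \<partial>lborel) =
      (\<integral>\<^sup>+s. ennreal (a s * B s) * ?I s + ennreal (A s * b s) * ?I s \<partial>lborel)"
    proof (rule nn_integral_cong)
      fix s
      have "ennreal (a s * B s + A s * b s) = ennreal (a s * B s) + ennreal (A s * b s)"
        using a0[of s] b0[of s] A0[of s] B0[of s] by (intro ennreal_plus) auto
      then show "ennreal (a s * B s + A s * b s) * ?I s = ennreal (a s * B s) * ?I s + ennreal (A s * b s) * ?I s"
        by (simp only: distrib_right)
    qed
    also have "\<dots> = (\<integral>\<^sup>+s. ennreal (a s * B s) * ?I s \<partial>lborel) + (\<integral>\<^sup>+s. ennreal (A s * b s) * ?I s \<partial>lborel)"
      by (rule nn_integral_add) auto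
    finally show ?thesis .
  qed
  have "ennreal (1 - A w) + ennreal (1 - B w) =
     (\<integral>\<^sup>+s. ennreal (a s * B s + A s * b s) * ?I s \<partial>lborel) + ennreal (1 - A w) * ennreal (1 - B w)"
    (is "?L = ?R")
  proof -
    have "?L = ((\<integral>\<^sup>+s. ennreal (a s * B s) * ?I s \<partial>lborel) +
      (\<integral>\<^sup>+s. ennreal (a s) * ?I s * (\<integral>\<^sup>+r. ennreal (b r) * indicator {0<..s} r \<partial>lborel) \<partial>lborel))
      + ((\<integral>\<^sup>+s. ennreal (A s * b s) * ?I s \<partial>lborel) +
      (\<integral>\<^sup>+s. ennreal (b s) * ?I s * (\<integral>\<^sup>+r. ennreal (a r) * indicator {0<..s} r \<partial>lborel) \<partial>lborel))"
      by (rule arg_cong2[where f="(+)", OF ia ib])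
    also have "\<dots> = ?R" unfolding sum f by (simp only: add_ac)
    finally show ?thesis .
  qed
  then have "ennreal (1 - A w) + ennreal (1 - B w) =
     (\<integral>\<^sup>+s. ennreal (a s * B s + A s * b s) * ?I s \<partial>lborel) + ennreal ((1 - A w) * (1 - B w))"
    using A1[of w] B1[of w] by (simp add: ennreal_mult)
  moreover have "0 \<le> (1 - A w) * (1 - B w)" using A1[of w] B1[of w] by simp
  ultimately have "(\<integral>\<^sup>+s. ennreal (a s * B s + A s * b s) * ?I s \<partial>lborel) = ennreal ((1 - A w) + (1 - B w) - (1 - A w) * (1 - B w))"
    using A1[of w] B1[of w] by (intro ennreal_eq_from_sum) auto
  then show ?thesis by (simp add: algebra_simps)
qed



lemma prod_factor:
  fixes G g :: "nat \<Rightarrow> real \<Rightarrow> real" and I :: "nat set"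
  assumes "finite I"
    and "\<forall>k\<in>I. G k \<in> borel_measurable borel \<and> g k \<in> borel_measurable borel \<and> (\<forall>s. 0 \<le> g k s) \<and>
      (\<forall>w. 0 \<le> G k w \<and> G k w \<le> 1 \<and>
        (\<integral>\<^sup>+s. ennreal (g k s) * indicator {0<..w} s \<partial>lborel) = ennreal (1 - G k w))"
  shows "\<forall>w. (\<integral>\<^sup>+s. ennreal (\<Sum>j\<in>I. g j s * (\<Prod>k\<in>I-{j}. G k s)) * indicator {0<..w} s \<partial>lborel)
      = ennreal (1 - (\<Prod>k\<in>I. G k w))"
  using assms
proof (induction I rule: finite_induct)
  case empty
  then show ?case by simp
next
  case (insert i I)
  let ?a = "\<lambda>s. \<Sum>j\<in>I. g j s * (\<Prod>k\<in>I-{j}. G k s)"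
  let ?A = "\<lambda>s. \<Prod>k\<in>I. G k s"
  have IH: "\<And>w. (\<integral>\<^sup>+s. ennreal (?a s) * indicator {0<..w} s \<partial>lborel) = ennreal (1 - ?A w)"
    using insert by auto
  have Gm: "\<And>k. k \<in> insert i I \<Longrightarrow> G k \<in> borel_measurable borel" and gm: "\<And>k. k \<in> insert i I \<Longrightarrow> g k \<in> borel_measurable borel"
    and g0: "\<And>k s. k \<in> insert i I \<Longrightarrow> 0 \<le> g k s" and G0: "\<And>k w. k \<in> insert i I \<Longrightarrow> 0 \<le> G k w"
    and G1: "\<And>k w. k \<in> insert i I \<Longrightarrow> G k w \<le> 1"
    and Gi: "\<And>k w. k \<in> insert i I \<Longrightarrow> (\<integral>\<^sup>+s. ennreal (g k s) * indicator {0<..w} s \<partial>lborel) = ennreal (1 - G k w)"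
    using insert.prems by auto
  have am: "?a \<in> borel_measurable borel" using Gm gm by (intro borel_measurable_sum borel_measurable_times borel_measurable_prod) auto
  have Am: "?A \<in> borel_measurable borel" using Gm by (intro borel_measurable_prod) auto
  have a0: "0 \<le> ?a s" for s using g0 G0 by (intro sum_nonneg mult_nonneg_nonneg prod_nonneg) auto
  have A0: "0 \<le> ?A s" for s using G0 by (intro prod_nonneg) auto
  have A1: "?A s \<le> 1" for s using G0 G1 by (intro prod_le_1) auto
  have eq: "(\<Sum>j\<in>insert i I. g j s * (\<Prod>k\<in>insert i I-{j}. G k s)) = ?a s * G i s + ?A s * g i s" for s
  proof -
    have "(\<Sum>j\<in>insert i I. g j s * (\<Prod>k\<in>insert i I-{j}. G k s)) =
        g i s * (\<Prod>k\<in>insert i I-{i}. G k s) + (\<Sum>j\<in>I. g j s * (\<Prod>k\<in>insert i I-{j}. G k s))"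
      using insert.hyps by (simp add: sum.insert)
    also have "(\<Prod>k\<in>insert i I-{i}. G k s) = ?A s" using insert.hyps by (simp add: insert_Diff_if)
    also have "(\<Sum>j\<in>I. g j s * (\<Prod>k\<in>insert i I-{j}. G k s)) = (\<Sum>j\<in>I. g j s * (\<Prod>k\<in>I-{j}. G k s) * G i s)"
    proof (rule sum.cong[OF refl])
      fix j assume "j \<in> I"
      then have "insert i I - {j} = insert i (I - {j})" using insert.hyps by auto
      then show "g j s * (\<Prod>k\<in>insert i I-{j}. G k s) = g j s * (\<Prod>k\<in>I-{j}. G k s) * G i s"
        using insert.hyps by (simp add: mult_ac)
    qed
    also have "\<dots> = ?a s * G i s" by (simp add: sum_distrib_right)
    finally show ?thesis by (simp add: mult_ac)
  qed
  show ?case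
  proof
    fix w
    have "(\<integral>\<^sup>+s. ennreal (?a s * G i s + ?A s * g i s) * indicator {0<..w} s \<partial>lborel) = ennreal (1 - ?A w * G i w)"
      by (rule two_factor[OF am gm[of i] Am Gm[of i] a0 g0 A0 A1 G0 G1 IH Gi]) auto
    then show "(\<integral>\<^sup>+s. ennreal (\<Sum>j\<in>insert i I. g j s * (\<Prod>k\<in>insert i I-{j}. G k s)) * indicator {0<..w} s \<partial>lborel)
      = ennreal (1 - (\<Prod>k\<in>insert i I. G k w))"
      using insert.hyps by (simp add: eq mult_ac)
  qed
qed



lemma sets_borel_ereal_gen:
  "sets (borel :: ereal measure) = sigma_sets UNIV (insert UNIV (range greaterThan))"
proof -
  have "sets (borel :: ereal measure) = sigma_sets UNIV (range greaterThan)"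
    by (subst borel_Ioi) (simp add: sets_measure_of)
  also have "\<dots> = sigma_sets UNIV (insert UNIV (range greaterThan))"
    by (rule sigma_sets_eqI) (auto intro: sigma_sets_top)
  finally show ?thesis .
qed

lemma ereal_measure_eqI:
  fixes M N :: "ereal measure"
  assumes sM: "sets M = sets borel" and sN: "sets N = sets borel"
    and eqa: "\<And>a::real. emeasure M {ereal a<..} = emeasure N {ereal a<..}"
    and eqU: "emeasure M UNIV = emeasure N UNIV" and fin: "emeasure M UNIV \<noteq> \<infinity>"
    and full: "emeasure M {ereal r0<..} = emeasure M UNIV"
  shows "M = N"
proof (rule measure_eqI_generator_eq[where E="insert UNIV (range greaterThan)" and \<Omega>=UNIV and A="\<lambda>_. UNIV"])
  show "Int_stable (insert UNIV (range (greaterThan :: ereal \<Rightarrow> _)))"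
    unfolding Int_stable_def
  proof (intro ballI)
    fix a b :: "ereal set" assume "a \<in> insert UNIV (range greaterThan)" "b \<in> insert UNIV (range greaterThan)"
    then show "a \<inter> b \<in> insert UNIV (range greaterThan)"
    proof (elim insertE rangeE)
      fix x y :: ereal assume "a = {x<..}" "b = {y<..}"
      then have "a \<inter> b = {max x y<..}" by auto
      then show ?thesis by auto
    qed auto
  qed
  have spM: "space M = UNIV" using sets_eq_imp_space_eq[OF sM] by simp
  have spN: "space N = UNIV" using sets_eq_imp_space_eq[OF sN] by simp
  have fullN: "emeasure N {ereal r0<..} = emeasure N UNIV" using full eqa eqU by simp
  have minf: "emeasure K {-\<infinity><..} = emeasure K UNIV"
    if "sets K = sets borel" "emeasure K {ereal r0<..} = emeasure K UNIV" for K :: "ereal measure"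
  proof (rule antisym)
    have sp: "space K = UNIV" using sets_eq_imp_space_eq[OF that(1)] by simp
    show "emeasure K {-\<infinity><..} \<le> emeasure K UNIV"
      by (metis emeasure_space sp)
    have "emeasure K {ereal r0<..} \<le> emeasure K {-\<infinity><..}"
      by (rule emeasure_mono) (auto simp: that(1))
    then show "emeasure K UNIV \<le> emeasure K {-\<infinity><..}" using that(2) by simp
  qed
  show "emeasure M X = emeasure N X" if "X \<in> insert UNIV (range greaterThan)" for X
    using that
  proof (elim insertE rangeE)
    fix x :: ereal assume X: "X = {x<..}"
    show ?thesis
    proof (cases x)
      case (real r) then show ?thesis using X eqa by simp
    next
      case PInf
      have "{x<..} = ({}::ereal set)" using PInf by auto
      then show ?thesis using X by simp
    next
      case MInf then show ?thesis using X minf[OF sM full] minf[OF sN fullN] eqU by simp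
    qed
  qed (simp add: eqU)
  show "sets M = sigma_sets UNIV (insert UNIV (range greaterThan))" using sM sets_borel_ereal_gen by simp
  show "sets N = sigma_sets UNIV (insert UNIV (range greaterThan))" using sN sets_borel_ereal_gen by simp
qed (use fin in auto)



locale hsetup =
  fixes mu :: "ereal measure" and eta :: real and f h :: "real \<Rightarrow> real"
  assumes eta_pos: "eta > 0"
    and mu_prob: "prob_space mu" and mu_sets: "sets mu = sets borel"
    and mu_pos: "emeasure mu {..0} = 0"
    and f_meas: "f \<in> borel_measurable borel" and f_nonneg: "\<And>t. f t \<ge> 0"
    and f_dens: "\<And>t. t > 0 \<Longrightarrow> emeasure mu {..ereal t} = (\<integral>\<^sup>+ s\<in>{0<..t}. ennreal (f s) \<partial>lborel)"
    and h_def: "\<And>t. t > 0 \<Longrightarrow> h t = f t / (1 - measure mu {..ereal t})"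
    and h_int: "(\<integral>\<^sup>+ t\<in>{0<..}. ennreal (h t) \<partial>lborel) < 1"
begin

sublocale P: prob_space mu by (rule mu_prob)

lemma sets_mu[measurable_cong, simp]: "sets mu = sets borel" by (rule mu_sets)

lemma space_mu[simp]: "space mu = UNIV"
  using sets_eq_imp_space_eq[OF mu_sets] by simp

lemma f_meas'[measurable]: "f \<in> borel_measurable borel" by (rule f_meas)

lemma dens_all: "emeasure mu {..ereal x} = (\<integral>\<^sup>+ s. ennreal (f s) * indicator {0<..x} s \<partial>lborel)"
proof (cases "x > 0")
  case True then show ?thesis using f_dens[OF True] by simp
next
  case False
  have "emeasure mu {..ereal x} \<le> emeasure mu {..0}"
    using False by (intro emeasure_mono) (auto simp: zero_ereal_def)
  then have "emeasure mu {..ereal x} = 0" using mu_pos by simp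
  moreover have "{0<..x} = {}" using False by auto
  ultimately show ?thesis by simp
qed

lemma Ioc_dens:
  assumes "0 \<le> a" "a \<le> b"
  shows "emeasure mu {ereal a<..ereal b} = (\<integral>\<^sup>+ s. ennreal (f s) * indicator {a<..b} s \<partial>lborel)"
proof -
  have "emeasure mu {..ereal b} = emeasure mu {..ereal a} + emeasure mu {ereal a<..ereal b}"
  proof -
    have "ereal a \<le> ereal b" using assms by simp
    then have "{..ereal b} = {..ereal a} \<union> {ereal a<..ereal b}" by (auto intro: order_trans)
    then show ?thesis by (subst plus_emeasure) auto
  qed
  moreover have "(\<integral>\<^sup>+ s. ennreal (f s) * indicator {0<..b} s \<partial>lborel) =
     (\<integral>\<^sup>+ s. ennreal (f s) * indicator {0<..a} s \<partial>lborel) + (\<integral>\<^sup>+ s. ennreal (f s) * indicator {a<..b} s \<partial>lborel)"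
  proof -
    have "(\<integral>\<^sup>+ s. ennreal (f s) * indicator {0<..b} s \<partial>lborel) =
       (\<integral>\<^sup>+ s. ennreal (f s) * indicator {0<..a} s + ennreal (f s) * indicator {a<..b} s \<partial>lborel)"
      using assms by (intro nn_integral_cong) (auto simp: indicator_def)
    also have "\<dots> = (\<integral>\<^sup>+ s. ennreal (f s) * indicator {0<..a} s \<partial>lborel) + (\<integral>\<^sup>+ s. ennreal (f s) * indicator {a<..b} s \<partial>lborel)"
      by (rule nn_integral_add) auto
    finally show ?thesis .
  qed
  ultimately have E: "emeasure mu {..ereal a} + emeasure mu {ereal a<..ereal b} =
     emeasure mu {..ereal a} + (\<integral>\<^sup>+ s. ennreal (f s) * indicator {a<..b} s \<partial>lborel)"
    by (metis dens_all)
  have "emeasure mu {..ereal a} \<noteq> \<top>" by simp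
  with E show ?thesis by (simp add: ennreal_add_left_cancel)
qed

lemma no_atom: "emeasure mu {ereal c} = 0"
proof (cases "c > 0")
  case False
  have "emeasure mu {ereal c} \<le> emeasure mu {..0}"
    using False by (intro emeasure_mono) (auto simp: zero_ereal_def)
  then show ?thesis using mu_pos by simp
next
  case True
  define nu where "nu = density lborel (\<lambda>s. ennreal (f s) * indicator {0<..} s)"
  define B where "B n = {c - 1 / Suc n<..c}" for n :: nat
  have nuB: "emeasure nu (B n) = emeasure mu {ereal (max 0 (c - 1 / Suc n))<..ereal c}" for n
  proof -
    have "emeasure nu (B n) = (\<integral>\<^sup>+ s. ennreal (f s) * indicator {max 0 (c - 1 / Suc n)<..c} s \<partial>lborel)"
      unfolding nu_def B_def
      by (subst emeasure_density) (auto intro!: nn_integral_cong simp: indicator_def)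
    also have "\<dots> = emeasure mu {ereal (max 0 (c - 1 / Suc n))<..ereal c}"
      using True by (intro Ioc_dens[symmetric]) auto
    finally show ?thesis .
  qed
  have le: "emeasure mu {ereal c} \<le> emeasure nu (B n)" for n
  proof -
    have "c - 1 / Suc n < c" by simp
    then have "{ereal c} \<subseteq> {ereal (max 0 (c - 1 / Suc n))<..ereal c}" using True by auto
    then show ?thesis unfolding nuB by (intro emeasure_mono) auto
  qed
  have "(INF n. emeasure nu (B n)) = emeasure nu (\<Inter>n. B n)"
  proof (rule INF_emeasure_decseq)
    show "range B \<subseteq> sets nu" unfolding nu_def B_def by auto
    show "decseq B" unfolding B_def decseq_def
    proof (intro allI impI subsetI)
      fix m n :: nat and x assume "m \<le> n" "x \<in> {c - 1 / Suc n<..c}"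
      moreover have "1 / real (Suc n) \<le> 1 / Suc m" using \<open>m \<le> n\<close> by (intro divide_left_mono) auto
      ultimately show "x \<in> {c - 1 / Suc m<..c}" by auto
    qed
    show "emeasure nu (B i) \<noteq> \<infinity>" for i unfolding nuB by simp
  qed
  moreover have "(\<Inter>n. B n) = {c}"
  proof (intro set_eqI iffI)
    fix x assume "x \<in> (\<Inter>n. B n)"
    then have x: "\<And>n. c - 1 / Suc n < x \<and> x \<le> c" unfolding B_def by auto
    show "x \<in> {c}"
    proof (rule ccontr)
      assume "x \<notin> {c}"
      then have "0 < c - x" using x[of 0] by auto
      then obtain n where "1 / Suc n < c - x" using nat_approx_posE by blast
      then show False using x[of n] by auto
    qed
  qed (auto simp: B_def)
  moreover have "emeasure nu {c} = 0"
    unfolding nu_def by (subst emeasure_density) (auto intro!: nn_integral_cong_AE eventually_mono[OF AE_lborel_singleton[of c]])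
  ultimately have "(INF n. emeasure nu (B n)) = 0" by simp
  then have "emeasure mu {ereal c} \<le> 0" using le by (metis INF_greatest)
  then show ?thesis by simp
qed

definition F where "F x = measure mu {..ereal x}"
definition Fbar where "Fbar x = measure mu {ereal x<..}"

lemma F_Fbar: "1 - F x = Fbar x"
proof -
  have "UNIV - {..ereal x} = {ereal x<..}" by auto
  then show ?thesis unfolding F_def Fbar_def using P.prob_compl[of "{..ereal x}"] by simp
qed

lemma emeasure_Ici: "emeasure mu {ereal c..} = emeasure mu {ereal c<..}"
proof -
  have "{ereal c..} = {ereal c} \<union> {ereal c<..}" by auto
  then have "emeasure mu {ereal c..} = emeasure mu {ereal c} + emeasure mu {ereal c<..}"
    by (simp add: plus_emeasure)
  then show ?thesis using no_atom by simp
qed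

lemma Fbar_diff: "a \<le> b \<Longrightarrow> Fbar a - Fbar b = measure mu {ereal a<..ereal b}"
proof -
  assume "a \<le> b"
  then have "ereal a \<le> ereal b" by simp
  then have U: "{ereal a<..} = {ereal a<..ereal b} \<union> {ereal b<..}"
    by (auto dest: le_less_trans[OF \<open>ereal a \<le> ereal b\<close>])
  have "Fbar a = measure mu {ereal a<..ereal b} + Fbar b"
    unfolding Fbar_def U by (rule P.finite_measure_Union) auto
  then show ?thesis by simp
qed

lemma F_mono: "mono F"
  unfolding F_def mono_def by (auto intro!: P.finite_measure_mono)

lemma F_meas[measurable]: "F \<in> borel_measurable borel"
  using F_mono by (rule borel_measurable_mono)

lemma Fbar_eq: "Fbar x = 1 - F x" using F_Fbar by simp

lemma Fbar_meas[measurable]: "Fbar \<in> borel_measurable borel"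
  unfolding Fbar_eq[abs_def] by measurable

lemma F_emeasure: "emeasure mu {..ereal x} = ennreal (F x)"
  unfolding F_def by (simp add: P.emeasure_eq_measure)

lemma F0: "F 0 = 0"
  using mu_pos unfolding F_def by (simp add: measure_def zero_ereal_def)

lemma F_nonneg: "0 \<le> F x" unfolding F_def by simp

lemma mu_inf_pos: "measure mu {\<infinity>} > 0"
proof (rule ccontr)
  assume "\<not> measure mu {\<infinity>} > 0"
  then have inf0: "measure mu {\<infinity>} = 0" using measure_nonneg[of mu "{\<infinity>}"] by linarith
  define nu where "nu = density lborel (\<lambda>s. ennreal (f s) * indicator {0<..} s)"
  have sets_nu[simp]: "sets nu = sets borel" unfolding nu_def by simp
  have nu_le: "emeasure nu {..x} = emeasure mu {..ereal x}" for x
    unfolding nu_def dens_all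
    by (subst emeasure_density) (auto intro!: nn_integral_cong simp: indicator_def)
  have "emeasure nu UNIV \<le> 1"
  proof -
    have "(\<lambda>n. emeasure nu {..real n}) \<longlonglongrightarrow> emeasure nu (\<Union>n. {..real n})"
      by (rule Lim_emeasure_incseq) (auto simp: incseq_def)
    moreover have "(\<Union>n. {..real n}) = UNIV"
      by (auto intro: real_nat_ceiling_ge)
    ultimately have L: "(\<lambda>n. emeasure nu {..real n}) \<longlonglongrightarrow> emeasure nu UNIV" by simp
    show ?thesis
    proof (rule Lim_bounded[OF L])
      show "\<forall>n\<ge>0. emeasure nu {..real n} \<le> 1" unfolding nu_le by (auto simp: P.emeasure_le_1)
    qed
  qed
  moreover have "space nu = UNIV" unfolding nu_def by simp
  ultimately have finnu: "finite_measure nu"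
    by (intro finite_measureI) (auto simp: top_unique)
  then interpret nu: finite_borel_measure nu
    by (simp add: finite_borel_measure_def finite_borel_measure_axioms_def)
  have cdf_F: "cdf nu x = F x" for x
    unfolding cdf_def F_def measure_def nu_le ..
  have contF: "isCont F x" for x
  proof -
    have "emeasure nu {x} = 0"
      unfolding nu_def by (subst emeasure_density) (auto intro!: nn_integral_cong_AE eventually_mono[OF AE_lborel_singleton[of x]])
    then have "measure nu {x} = 0" by (simp add: measure_def)
    then have "isCont (cdf nu) x" by (simp add: nu.isCont_cdf)
    then show ?thesis unfolding cdf_F[abs_def] .
  qed
  have limF: "(\<lambda>n. F (real n)) \<longlonglongrightarrow> 1"
  proof -
    have "(\<lambda>n. measure mu {..ereal (real n)}) \<longlonglongrightarrow> measure mu (\<Union>n. {..ereal (real n)})"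
      by (rule P.finite_Lim_measure_incseq) (auto simp: incseq_def)
    moreover have "(\<Union>n. {..ereal (real n)}) = UNIV - {\<infinity>}"
    proof (intro set_eqI iffI)
      fix x :: ereal assume "x \<in> UNIV - {\<infinity>}"
      then show "x \<in> (\<Union>n. {..ereal (real n)})"
      proof (cases x)
        case (real r)
        obtain n :: nat where "r \<le> real n" using real_nat_ceiling_ge by blast
        then show ?thesis using real by auto
      qed auto
    qed auto
    moreover have "measure mu (UNIV - {\<infinity>}) = 1" using P.prob_compl[of "{\<infinity>}"] inf0 by simp
    ultimately show ?thesis unfolding F_def by simp
  qed
  obtain r where r: "(\<integral>\<^sup>+ t\<in>{0<..}. ennreal (h t) \<partial>lborel) = ennreal r" "0 \<le> r" "r < 1"
    using h_int by (cases "(\<integral>\<^sup>+ t\<in>{0<..}. ennreal (h t) \<partial>lborel)") (auto simp: ennreal_less_iff)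
  define y where "y = (1 + r) / 2"
  have y: "r < y" "y < 1" "0 < y" using r unfolding y_def by auto
  from limF y(2) obtain n where n: "y < F (real n)"
    by (metis (no_types, lifting) eventually_sequentially le_refl order_tendstoD(1))
  have "\<exists>t. 0 \<le> t \<and> t \<le> real n \<and> F t = y"
    using n y F0 by (intro IVT') (auto intro!: continuous_at_imp_continuous_on contF)
  then obtain t where t: "0 \<le> t" "F t = y" by blast
  have "ennreal y = emeasure mu {..ereal t}" using t F_emeasure by simp
  also have "\<dots> = (\<integral>\<^sup>+ s. ennreal (f s) * indicator {0<..t} s \<partial>lborel)" by (rule dens_all)
  also have "\<dots> \<le> (\<integral>\<^sup>+ s. ennreal (h s) * indicator {0<..} s \<partial>lborel)"
  proof (rule nn_integral_mono)
    fix s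
    show "ennreal (f s) * indicator {0<..t} s \<le> ennreal (h s) * indicator {0<..} s"
    proof (cases "0 < s \<and> s \<le> t")
      case True
      have "F s \<le> F t" using True F_mono by (auto simp: mono_def)
      then have d: "0 < 1 - F s" "1 - F s \<le> 1" using t y F_nonneg[of s] by auto
      have "h s = f s / (1 - F s)" using h_def[of s] True unfolding F_def by simp
      moreover have "f s \<le> f s / (1 - F s)"
        using d f_nonneg[of s] by (simp add: le_divide_eq mult_left_le)
      ultimately show ?thesis using True by (auto intro: ennreal_leI)
    qed auto
  qed
  also have "\<dots> = ennreal r" using r by simp
  finally show False using y r by (simp add: ennreal_le_iff)
qed

lemma Fbar_pos: "Fbar x > 0"
proof -
  have "measure mu {\<infinity>} \<le> Fbar x" unfolding Fbar_def by (intro P.finite_measure_mono) auto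
  then show ?thesis using mu_inf_pos by simp
qed

definition Mexp where "Mexp = distr (density lborel (exponential_density eta)) borel ereal"
definition Ge where "Ge w = (if 0 \<le> w then exp (- w * eta) else 1)"
definition ge where "ge s = (if 0 < s then eta * exp (- s * eta) else 0)"

lemma prob_D: "prob_space (density lborel (exponential_density eta))"
  using eta_pos by (rule prob_space_exponential_density)

lemma Mexp_prob: "prob_space Mexp"
  unfolding Mexp_def by (rule prob_space.prob_space_distr[OF prob_D]) auto

lemma sets_Mexp[simp]: "sets Mexp = sets borel" unfolding Mexp_def by simp

lemma measure_D_le: "measure (density lborel (exponential_density eta)) {..w} = (if 0 \<le> w then 1 - exp (- eta * w) else 0)"
  using emeasure_erlang_density[OF eta_pos, of 0 w] eta_pos
  by (simp add: measure_def erlang_CDF_0)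

lemma Mexp_surv: "emeasure Mexp {ereal w<..} = ennreal (Ge w)"
proof -
  let ?D = "density lborel (exponential_density eta)"
  interpret D: prob_space ?D by (rule prob_D)
  have "emeasure Mexp {ereal w<..} = emeasure ?D {w<..}"
    unfolding Mexp_def by (subst emeasure_distr) (auto intro!: arg_cong[where f="emeasure ?D"])
  also have "\<dots> = ennreal (measure ?D {w<..})" by (simp add: D.emeasure_eq_measure)
  also have "measure ?D {w<..} = 1 - measure ?D {..w}"
  proof -
    have "UNIV - {..w} = {w<..}" by auto
    then show ?thesis using D.prob_compl[of "{..w}"] by simp
  qed
  also have "1 - measure ?D {..w} = Ge w" unfolding measure_D_le Ge_def by (auto simp: mult.commute)
  finally show ?thesis .
qed

lemma Ge_nonneg: "0 \<le> Ge w" and Ge_le1: "Ge w \<le> 1" and Ge_pos: "0 < Ge w"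
  using eta_pos by (auto simp: Ge_def)

lemma Ge_meas[measurable]: "Ge \<in> borel_measurable borel" unfolding Ge_def by measurable
lemma ge_meas[measurable]: "ge \<in> borel_measurable borel" unfolding ge_def by measurable
lemma ge_nonneg: "0 \<le> ge s" using eta_pos by (auto simp: ge_def)

lemma ge_int: "(\<integral>\<^sup>+s. ennreal (ge s) * indicator {0<..w} s \<partial>lborel) = ennreal (1 - Ge w)"
proof (cases "0 < w")
  case False
  then have "{0<..w} = {}" by auto
  moreover have "Ge w = 1" using False by (auto simp: Ge_def)
  ultimately show ?thesis by simp
next
  case True
  let ?D = "density lborel (exponential_density eta)"
  have "(\<integral>\<^sup>+s. ennreal (ge s) * indicator {0<..w} s \<partial>lborel) =
      (\<integral>\<^sup>+s. ennreal (exponential_density eta s) * indicator {..w} s \<partial>lborel)"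
    by (intro nn_integral_cong_AE eventually_mono[OF AE_lborel_singleton[of 0]])
       (auto simp: ge_def exponential_density_def indicator_def mult.commute)
  also have "\<dots> = emeasure ?D {..w}" by (subst emeasure_density) auto
  also have "\<dots> = ennreal (measure ?D {..w})"
  proof -
    interpret D: prob_space ?D by (rule prob_D)
    show ?thesis by (simp add: D.emeasure_eq_measure)
  qed
  also have "\<dots> = ennreal (1 - Ge w)" unfolding measure_D_le Ge_def using True by (simp add: mult.commute)
  finally show ?thesis .
qed

definition Gc where "Gc c w = (if 0 \<le> w then Fbar (c + w) / Fbar c else 1)"
definition gc where "gc c s = (if 0 < s then f (c + s) / Fbar c else 0)"

lemma Ici_pos: "emeasure mu {ereal c..} = ennreal (Fbar c)"
  unfolding emeasure_Ici Fbar_def by (simp add: P.emeasure_eq_measure)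

lemma measure_Ici: "measure mu {ereal c..} = Fbar c"
  using Ici_pos[of c] Fbar_pos[of c] by (simp add: P.emeasure_eq_measure)

lemma Mc_prob: "prob_space (cond_excess mu c)"
proof -
  have "prob_space (uniform_measure mu {ereal c..})"
    using Fbar_pos[of c] by (intro prob_space_uniform_measure) (auto simp: Ici_pos)
  then show ?thesis unfolding cond_excess_def by (rule prob_space.prob_space_distr) auto
qed

lemma sets_Mc[simp]: "sets (cond_excess mu c) = sets borel" unfolding cond_excess_def by simp

lemma Fbar_anti: "a \<le> b \<Longrightarrow> Fbar b \<le> Fbar a"
  unfolding Fbar_def by (intro P.finite_measure_mono) auto

lemma Mc_surv:
  assumes "0 \<le> c"
  shows "emeasure (cond_excess mu c) {ereal w<..} = ennreal (Gc c w)"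
proof -
  have "emeasure (cond_excess mu c) {ereal w<..} =
     emeasure (uniform_measure mu {ereal c..}) ((\<lambda>v. v - ereal c) -` {ereal w<..})"
    unfolding cond_excess_def by (subst emeasure_distr) auto
  also have "\<dots> = emeasure mu ({ereal c..} \<inter> (\<lambda>v. v - ereal c) -` {ereal w<..}) / emeasure mu {ereal c..}"
  proof (rule emeasure_uniform_measure)
    have m: "(\<lambda>v::ereal. v - ereal c) \<in> borel_measurable borel" by measurable
    show "(\<lambda>v. v - ereal c) -` {ereal w<..} \<in> sets mu"
      using measurable_sets[OF m, of "{ereal w<..}"] by simp
  qed auto
  also have "{ereal c..} \<inter> (\<lambda>v. v - ereal c) -` {ereal w<..} = (if 0 \<le> w then {ereal (c + w)<..} else {ereal c..})"
  proof (intro set_eqI)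
    fix v :: ereal
    show "v \<in> {ereal c..} \<inter> (\<lambda>v. v - ereal c) -` {ereal w<..} \<longleftrightarrow> v \<in> (if 0 \<le> w then {ereal (c + w)<..} else {ereal c..})"
      by (cases v) auto
  qed
  finally show ?thesis
    using Fbar_pos[of c] Fbar_pos[of "c + w"]
    by (auto simp: Gc_def measure_Ici Fbar_def[symmetric] P.emeasure_eq_measure divide_ennreal less_imp_le)
qed

lemma Gc_nonneg: "0 \<le> Gc c w" using Fbar_pos by (auto simp: Gc_def less_imp_le)
lemma Gc_pos: "0 < Gc c w" using Fbar_pos by (auto simp: Gc_def)
lemma Gc_le1: "Gc c w \<le> 1" using Fbar_pos Fbar_anti[of c "c + w"] by (auto simp: Gc_def)
lemma Gc_meas[measurable]: "Gc c \<in> borel_measurable borel" unfolding Gc_def by measurable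
lemma gc_meas[measurable]: "gc c \<in> borel_measurable borel" unfolding gc_def by measurable
lemma gc_nonneg: "0 \<le> gc c s" using Fbar_pos f_nonneg by (auto simp: gc_def less_imp_le)

lemma gc_int:
  assumes c: "0 \<le> c"
  shows "(\<integral>\<^sup>+s. ennreal (gc c s) * indicator {0<..w} s \<partial>lborel) = ennreal (1 - Gc c w)"
proof (cases "0 < w")
  case False
  then have "{0<..w} = {}" by auto
  moreover have "Gc c w = 1" using False Fbar_pos[of c] by (auto simp: Gc_def)
  ultimately show ?thesis by simp
next
  case True
  have "(\<integral>\<^sup>+s. ennreal (gc c s) * indicator {0<..w} s \<partial>lborel) =
      (\<integral>\<^sup>+s. ennreal (1 / Fbar c) * (ennreal (f (c + s)) * indicator {0<..w} s) \<partial>lborel)"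
    using Fbar_pos[of c] f_nonneg
    by (intro nn_integral_cong) (auto simp: gc_def indicator_def ennreal_mult[symmetric])
  also have "\<dots> = ennreal (1 / Fbar c) * (\<integral>\<^sup>+s. ennreal (f (c + s)) * indicator {0<..w} s \<partial>lborel)"
    by (rule nn_integral_cmult) auto
  also have "(\<integral>\<^sup>+s. ennreal (f (c + s)) * indicator {0<..w} s \<partial>lborel) =
      (\<integral>\<^sup>+x. ennreal (f x) * indicator {c<..c+w} x \<partial>lborel)"
    using nn_integral_real_affine[of "\<lambda>x. ennreal (f x) * indicator {c<..c+w} x" 1 c]
    by (simp add: indicator_def)
  also have "\<dots> = emeasure mu {ereal c<..ereal (c + w)}"
    using c True by (intro Ioc_dens[symmetric]) auto
  also have "\<dots> = ennreal (Fbar c - Fbar (c + w))"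
    using Fbar_diff[of c "c + w"] True by (simp add: P.emeasure_eq_measure)
  also have "ennreal (1 / Fbar c) * ennreal (Fbar c - Fbar (c + w)) = ennreal (1 - Gc c w)"
    using Fbar_pos[of c] Fbar_anti[of c "c + w"] True
    by (simp add: ennreal_mult[symmetric] Gc_def diff_divide_distrib)
  finally show ?thesis .
qed

end


lemma total_surv:
  fixes Phi S :: "real \<Rightarrow> real"
  assumes [measurable]: "Phi \<in> borel_measurable borel" and P0: "\<And>s. 0 \<le> Phi s"
    and Pneg: "\<And>s. s \<le> 0 \<Longrightarrow> Phi s = 0"
    and PF: "\<And>w. (\<integral>\<^sup>+s. ennreal (Phi s) * indicator {0<..w} s \<partial>lborel) = ennreal (1 - S w)"
    and S0: "\<And>w. 0 \<le> S w" and S1: "\<And>w. S w \<le> 1" and Slim: "(\<lambda>n. S (real n)) \<longlonglongrightarrow> 0"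
  shows "(\<integral>\<^sup>+s. ennreal (Phi s) * indicator {b<..} s \<partial>lborel) = ennreal (S b)"
proof -
  define Q where "Q = density lborel (\<lambda>s. ennreal (Phi s))"
  have EQ: "emeasure Q A = (\<integral>\<^sup>+s. ennreal (Phi s) * indicator A s \<partial>lborel)" if "A \<in> sets borel" for A
    unfolding Q_def using that by (subst emeasure_density) auto
  have "(\<lambda>n. emeasure Q {0<..real n}) \<longlonglongrightarrow> emeasure Q (\<Union>n. {0<..real n})"
    by (rule Lim_emeasure_incseq) (auto simp: Q_def incseq_def)
  moreover have "(\<Union>n. {0<..real n}) = {0<..}"
  proof (intro set_eqI iffI)
    fix x :: real assume "x \<in> {0<..}"
    moreover obtain n :: nat where "x \<le> real n" using real_nat_ceiling_ge by blast
    ultimately show "x \<in> (\<Union>n. {0<..real n})" by auto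
  qed auto
  ultimately have L1: "(\<lambda>n. ennreal (1 - S (real n))) \<longlonglongrightarrow> emeasure Q {0<..}"
    using EQ PF by simp
  have L2: "(\<lambda>n. ennreal (1 - S (real n))) \<longlonglongrightarrow> ennreal (1 - 0)"
    by (intro tendsto_ennrealI tendsto_diff tendsto_const Slim)
  have T: "(\<integral>\<^sup>+s. ennreal (Phi s) * indicator {0<..} s \<partial>lborel) = 1"
    using LIMSEQ_unique[OF L1 L2] EQ by simp
  have "(\<integral>\<^sup>+s. ennreal (Phi s) * indicator {0<..} s \<partial>lborel) =
     (\<integral>\<^sup>+s. ennreal (Phi s) * indicator {0<..b} s + ennreal (Phi s) * indicator {b<..} s \<partial>lborel)"
    using Pneg by (intro nn_integral_cong) (auto simp: indicator_def)
  also have "\<dots> = ennreal (1 - S b) + (\<integral>\<^sup>+s. ennreal (Phi s) * indicator {b<..} s \<partial>lborel)"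
    by (subst nn_integral_add) (auto simp: PF)
  finally have "ennreal 1 + ennreal 0 = (\<integral>\<^sup>+s. ennreal (Phi s) * indicator {b<..} s \<partial>lborel) + ennreal (1 - S b)"
    using T by (simp add: add.commute)
  from ennreal_eq_from_sum[OF this] S0[of b] S1[of b]
  show ?thesis by simp
qed

lemma last_ge: "sorted_wrt (<) (ts :: real list) \<Longrightarrow> i < length ts \<Longrightarrow> ts ! i \<le> last ts"
proof -
  assume ts: "sorted_wrt (<) ts" and i: "i < length ts"
  then have ne: "ts \<noteq> []" by auto
  show ?thesis
  proof (cases "i = length ts - 1")
    case True then show ?thesis using ne by (simp add: last_conv_nth)
  next
    case False
    then have "ts ! i < ts ! (length ts - 1)" using i sorted_wrt_nth_less[OF ts, of i "length ts - 1"] by auto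
    then show ?thesis using ne by (simp add: last_conv_nth)
  qed
qed

context hsetup
begin

lemma main:
  assumes ts: "sorted_wrt (<) ts"
  shows "\<exists>g. g \<in> borel_measurable borel \<and> (\<forall>t. g t \<ge> 0) \<and>
                next_time_law mu eta ts = distr (density lborel (\<lambda>t. ennreal (g t))) borel ereal \<and>
                (\<forall>t > last_time ts.
                   g t / (1 - (LINT s:{last_time ts..t}|lborel. g s))
                   = eta + (\<Sum>s\<leftarrow>ts. h (t - s)))"
proof -
  define l where "l = last_time ts"
  define n where "n = length ts"
  define cc where "cc j = l - ts ! (j - 1)" for j
  have cc0: "0 \<le> cc j" if "j \<in> {1..n}" for j
  proof -
    have ne: "ts \<noteq> []" and j: "j - 1 < length ts" using that by (auto simp: n_def)
    then have "ts ! (j - 1) \<le> last ts" using ts by (intro last_ge)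
    then show ?thesis using ne by (simp add: cc_def l_def last_time_def)
  qed
  define Mk where "Mk j = (if j = 0 then Mexp else cond_excess mu (cc j))" for j
  define G where "G j = (if j = 0 then Ge else Gc (cc j))" for j
  define gg where "gg j = (if j = 0 then ge else gc (cc j))" for j
  define I where "I = {0..n}"
  define S where "S w = (\<Prod>k\<in>I. G k w)" for w
  define Phi where "Phi s = (\<Sum>j\<in>I. gg j s * (\<Prod>k\<in>I-{j}. G k s))" for s
  have finI: "finite I" and zI: "0 \<in> I" by (auto simp: I_def)
  have Mk_prob: "prob_space (Mk j)" for j by (simp add: Mk_def Mexp_prob Mc_prob)
  have sets_Mk: "sets (Mk j) = sets borel" for j by (simp add: Mk_def)
  have Mk_surv: "emeasure (Mk j) {ereal w<..} = ennreal (G j w)" if "j \<in> I" for j w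
    using that cc0[of j] by (auto simp: Mk_def G_def Mexp_surv Mc_surv I_def)
  have G_meas[measurable]: "G k \<in> borel_measurable borel" for k by (simp add: G_def)
  have gg_meas[measurable]: "gg k \<in> borel_measurable borel" for k by (simp add: gg_def)
  have G0: "0 \<le> G k w" for k w by (simp add: G_def Ge_nonneg Gc_nonneg)
  have Gpos: "0 < G k w" for k w by (simp add: G_def Ge_pos Gc_pos)
  have G1: "G k w \<le> 1" for k w by (simp add: G_def Ge_le1 Gc_le1)
  have gg0: "0 \<le> gg k s" for k s by (simp add: gg_def ge_nonneg gc_nonneg)
  have ggneg: "gg k s = 0" if "s \<le> 0" for k s using that by (simp add: gg_def ge_def gc_def)
  have Gneg: "G k w = 1" if "w < 0" for k w using that by (simp add: G_def Ge_def Gc_def)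
  have comp: "\<forall>k\<in>I. G k \<in> borel_measurable borel \<and> gg k \<in> borel_measurable borel \<and> (\<forall>s. 0 \<le> gg k s) \<and>
      (\<forall>w. 0 \<le> G k w \<and> G k w \<le> 1 \<and>
        (\<integral>\<^sup>+s. ennreal (gg k s) * indicator {0<..w} s \<partial>lborel) = ennreal (1 - G k w))"
    using cc0 by (auto simp: G_def gg_def ge_int gc_int I_def Ge_nonneg Ge_le1 ge_nonneg gc_nonneg Gc_nonneg Gc_le1)
  have PF: "(\<integral>\<^sup>+s. ennreal (Phi s) * indicator {0<..w} s \<partial>lborel) = ennreal (1 - S w)" for w
    using prod_factor[OF finI comp] unfolding Phi_def S_def by blast
  have Phi_meas[measurable]: "Phi \<in> borel_measurable borel" unfolding Phi_def by measurable
  have Phi0: "0 \<le> Phi s" for s unfolding Phi_def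
    by (intro sum_nonneg mult_nonneg_nonneg prod_nonneg gg0 G0)
  have Phineg: "Phi s = 0" if "s \<le> 0" for s unfolding Phi_def using ggneg[OF that] by simp
  have S0: "0 \<le> S w" for w unfolding S_def by (intro prod_nonneg G0)
  have S1: "S w \<le> 1" for w unfolding S_def by (intro prod_le_1 G0 G1 conjI)
  have Spos: "0 < S w" for w unfolding S_def by (intro prod_pos Gpos)
  have Sneg: "S w = 1" if "w < 0" for w unfolding S_def using Gneg[OF that] by simp
  have Sle: "S w \<le> Ge w" for w
  proof -
    have "S w = G 0 w * (\<Prod>k\<in>I-{0}. G k w)" unfolding S_def using finI zI by (rule prod.remove)
    also have "\<dots> \<le> G 0 w * 1" using G0 G1 by (intro mult_left_mono prod_le_1) auto
    finally show ?thesis by (simp add: G_def)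
  qed
  have Slim: "(\<lambda>m. S (real m)) \<longlonglongrightarrow> 0"
  proof (rule tendsto_sandwich[where f="\<lambda>_. 0" and h="\<lambda>m. exp (- real m * eta)"])
    show "\<forall>\<^sub>F m in sequentially. 0 \<le> S (real m)" using S0 by simp
    show "\<forall>\<^sub>F m in sequentially. S (real m) \<le> exp (- real m * eta)"
    proof (intro always_eventually allI)
      fix m :: nat
      show "S (real m) \<le> exp (- real m * eta)" using Sle[of "real m"] by (simp add: Ge_def)
    qed
    show "(\<lambda>m. exp (- real m * eta)) \<longlonglongrightarrow> 0" using eta_pos by real_asymp
  qed simp
  have surv: "(\<integral>\<^sup>+s. ennreal (Phi s) * indicator {b<..} s \<partial>lborel) = ennreal (S b)" for b
    by (rule total_surv[OF Phi_meas Phi0 Phineg PF S0 S1 Slim])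
  have NTL: "next_time_law mu eta ts = distr (PiM I Mk) borel (\<lambda>\<omega>. ereal l + Min (\<omega> ` I))"
    unfolding next_time_law_def Let_def l_def n_def I_def Mk_def[abs_def] Mexp_def cc_def by simp
  interpret PP: product_prob_space Mk I
    by (simp add: product_prob_space_def product_prob_space_axioms_def product_sigma_finite_def
        Mk_prob prob_space_imp_sigma_finite)
  have spP: "space (PiM I Mk) = PiE I (\<lambda>_. UNIV)"
    unfolding space_PiM using sets_eq_imp_space_eq[OF sets_Mk] by simp
  have mP: "(\<lambda>\<omega>. ereal l + Min (\<omega> ` I)) \<in> borel_measurable (PiM I Mk)"
  proof -
    have "(\<lambda>\<omega>. Min ((\<lambda>i. \<omega> i) ` I)) \<in> borel_measurable (PiM I Mk)"
    proof (rule borel_measurable_Min[OF finI])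
      fix i assume "i \<in> I"
      then have "(\<lambda>\<omega>. \<omega> i) \<in> measurable (PiM I Mk) (Mk i)" by (rule measurable_component_singleton)
      then show "(\<lambda>\<omega>. \<omega> i) \<in> borel_measurable (PiM I Mk)"
        using measurable_cong_sets[OF refl sets_Mk] by blast
    qed
    then show ?thesis by simp
  qed
  have NTL_surv: "emeasure (next_time_law mu eta ts) {ereal a<..} = ennreal (S (a - l))" for a
  proof -
    have "emeasure (next_time_law mu eta ts) {ereal a<..} =
        emeasure (PiM I Mk) ((\<lambda>\<omega>. ereal l + Min (\<omega> ` I)) -` {ereal a<..} \<inter> space (PiM I Mk))"
      unfolding NTL using mP by (subst emeasure_distr) auto
    also have "(\<lambda>\<omega>. ereal l + Min (\<omega> ` I)) -` {ereal a<..} \<inter> space (PiM I Mk) = PiE I (\<lambda>_. {ereal (a - l)<..})"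
    proof -
      have eqv: "ereal a < ereal l + m \<longleftrightarrow> ereal (a - l) < m" for m :: ereal
        by (cases m) auto
      have "ereal (a - l) < Min (\<omega> ` I) \<longleftrightarrow> (\<forall>i\<in>I. ereal (a - l) < \<omega> i)" for \<omega> :: "nat \<Rightarrow> ereal"
        using finI zI by (subst Min_gr_iff) auto
      then show ?thesis unfolding spP using eqv by (auto simp: PiE_def Pi_def)
    qed
    also have "emeasure (PiM I Mk) (PiE I (\<lambda>_. {ereal (a - l)<..})) = (\<Prod>i\<in>I. emeasure (Mk i) {ereal (a - l)<..})"
      using finI by (intro PP.emeasure_PiM) (auto simp: sets_Mk)
    also have "\<dots> = (\<Prod>i\<in>I. ennreal (G i (a - l)))" by (intro prod.cong refl) (simp add: Mk_surv)
    also have "\<dots> = ennreal (S (a - l))" unfolding S_def by (rule prod_ennreal) (simp add: G0)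
    finally show ?thesis .
  qed
  have NTL_prob: "prob_space (next_time_law mu eta ts)"
    unfolding NTL using mP Mk_prob by (intro prob_space.prob_space_distr prob_space_PiM) auto
  have sets_NTL: "sets (next_time_law mu eta ts) = sets borel" unfolding NTL by simp
  define gf where "gf t = Phi (t - l)" for t
  have gf_meas[measurable]: "gf \<in> borel_measurable borel" unfolding gf_def by measurable
  have gf0: "0 \<le> gf t" for t unfolding gf_def by (rule Phi0)
  define D where "D = distr (density lborel (\<lambda>t. ennreal (gf t))) borel ereal"
  have shift: "(\<integral>\<^sup>+t. ennreal (gf t) * indicator A t \<partial>lborel) = (\<integral>\<^sup>+x. ennreal (Phi x) * indicator ((\<lambda>x. x + l) -` A) x \<partial>lborel)"
    if "A \<in> sets borel" for A
  proof -
    have "(\<integral>\<^sup>+t. ennreal (gf t) * indicator A t \<partial>lborel) = (\<integral>\<^sup>+x. ennreal (gf (l + x)) * indicator A (l + x) \<partial>lborel)"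
      using nn_integral_real_affine[of "\<lambda>t. ennreal (gf t) * indicator A t" 1 l] that by simp
    then show ?thesis by (simp add: gf_def indicator_def add.commute)
  qed
  have D_surv: "emeasure D {ereal a<..} = ennreal (S (a - l))" for a
  proof -
    have "emeasure D {ereal a<..} = emeasure (density lborel (\<lambda>t. ennreal (gf t))) {a<..}"
      unfolding D_def by (subst emeasure_distr) (auto intro!: arg_cong[where f="emeasure _"])
    also have "\<dots> = (\<integral>\<^sup>+t. ennreal (gf t) * indicator {a<..} t \<partial>lborel)" by (subst emeasure_density) auto
    also have "\<dots> = (\<integral>\<^sup>+x. ennreal (Phi x) * indicator {a - l<..} x \<partial>lborel)"
      by (subst shift) (auto intro!: nn_integral_cong simp: indicator_def)
    also have "\<dots> = ennreal (S (a - l))" by (rule surv)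
    finally show ?thesis .
  qed
  have D_UNIV: "emeasure D UNIV = 1"
  proof -
    have "emeasure D UNIV = emeasure (density lborel (\<lambda>t. ennreal (gf t))) UNIV"
      unfolding D_def by (subst emeasure_distr) auto
    also have "\<dots> = (\<integral>\<^sup>+t. ennreal (gf t) * indicator UNIV t \<partial>lborel)" by (subst emeasure_density) auto
    also have "\<dots> = (\<integral>\<^sup>+x. ennreal (Phi x) * indicator {-1<..} x \<partial>lborel)"
      using Phineg by (subst shift) (auto intro!: nn_integral_cong simp: indicator_def)
    also have "\<dots> = 1" using surv[of "-1"] Sneg[of "-1"] by simp
    finally show ?thesis .
  qed
  have NTL_UNIV: "emeasure (next_time_law mu eta ts) UNIV = 1"
    using prob_space.emeasure_space_1[OF NTL_prob] sets_eq_imp_space_eq[OF sets_NTL] by simp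
  have eq: "next_time_law mu eta ts = D"
  proof (rule ereal_measure_eqI)
    show "sets (next_time_law mu eta ts) = sets borel" by (rule sets_NTL)
    show "sets D = sets borel" unfolding D_def by simp
    show "emeasure (next_time_law mu eta ts) {ereal a<..} = emeasure D {ereal a<..}" for a
      using NTL_surv D_surv by simp
    show "emeasure (next_time_law mu eta ts) UNIV = emeasure D UNIV" using NTL_UNIV D_UNIV by simp
    show "emeasure (next_time_law mu eta ts) UNIV \<noteq> \<infinity>" using NTL_UNIV by simp
    show "emeasure (next_time_law mu eta ts) {ereal (l - 1)<..} = emeasure (next_time_law mu eta ts) UNIV"
      using NTL_surv[of "l - 1"] Sneg[of "-1"] NTL_UNIV by simp
  qed
  have haz: "gf t / (1 - (LINT s:{l..t}|lborel. gf s)) = eta + (\<Sum>s\<leftarrow>ts. h (t - s))" if tl: "t > l" for t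
  proof -
    define w where "w = t - l"
    have w: "0 < w" using tl by (simp add: w_def)
    have "(LINT s:{l..t}|lborel. gf s) = enn2real (\<integral>\<^sup>+s. ennreal (indicator {l..t} s * gf s) \<partial>lborel)"
      unfolding set_lebesgue_integral_def using gf0 by (subst integral_eq_nn_integral) auto
    also have "(\<integral>\<^sup>+s. ennreal (indicator {l..t} s * gf s) \<partial>lborel) = (\<integral>\<^sup>+s. ennreal (gf s) * indicator {l<..t} s \<partial>lborel)"
      using Phineg[of 0] by (intro nn_integral_cong) (auto simp: indicator_def gf_def)
    also have "\<dots> = (\<integral>\<^sup>+x. ennreal (Phi x) * indicator {0<..w} x \<partial>lborel)"
      by (subst shift) (auto intro!: nn_integral_cong simp: indicator_def w_def)
    also have "\<dots> = ennreal (1 - S w)" by (rule PF)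
    finally have LI: "(LINT s:{l..t}|lborel. gf s) = 1 - S w" using S1[of w] by simp
    have trm: "gg j w * (\<Prod>k\<in>I-{j}. G k w) = S w * (gg j w / G j w)" if "j \<in> I" for j
    proof -
      have "S w = G j w * (\<Prod>k\<in>I-{j}. G k w)" unfolding S_def using finI that by (rule prod.remove)
      then show ?thesis using Gpos[of j w] by (simp add: field_simps)
    qed
    have ratio0: "gg 0 w / G 0 w = eta" using w by (simp add: gg_def G_def ge_def Ge_def)
    have ratioj: "gg j w / G j w = h (t - ts ! (j - 1))" if "j \<in> {1..n}" for j
    proof -
      have c: "0 \<le> cc j" using cc0[OF that] .
      have pos: "0 < cc j + w" using c w by simp
      have "gg j w / G j w = (f (cc j + w) / Fbar (cc j)) / (Fbar (cc j + w) / Fbar (cc j))"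
        using that w by (simp add: gg_def G_def gc_def Gc_def)
      also have "\<dots> = f (cc j + w) / Fbar (cc j + w)" using Fbar_pos[of "cc j"] by simp
      also have "\<dots> = h (cc j + w)" using h_def[OF pos] by (simp add: Fbar_eq F_def)
      also have "cc j + w = t - ts ! (j - 1)" by (simp add: cc_def w_def)
      finally show ?thesis .
    qed
    have "Phi w = S w * (\<Sum>j\<in>I. gg j w / G j w)"
      unfolding Phi_def by (simp add: trm sum_distrib_left)
    also have "(\<Sum>j\<in>I. gg j w / G j w) = gg 0 w / G 0 w + (\<Sum>j\<in>{1..n}. gg j w / G j w)"
    proof -
      have "I = insert 0 {1..n}" by (auto simp: I_def)
      then show ?thesis by simp
    qed
    also have "(\<Sum>j\<in>{1..n}. gg j w / G j w) = (\<Sum>j\<in>{Suc 0..n}. h (t - ts ! (j - 1)))"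
      by (intro sum.cong) (auto simp: ratioj)
    also have "\<dots> = (\<Sum>i<n. h (t - ts ! i))" by (simp add: sum.atLeast1_atMost_eq)
    also have "\<dots> = (\<Sum>s\<leftarrow>ts. h (t - s))"
      by (simp add: sum_list_sum_nth n_def atLeast0LessThan)
    finally have X: "Phi w = S w * (gg 0 w / G 0 w + (\<Sum>s\<leftarrow>ts. h (t - s)))" .
    then have "Phi w = S w * (eta + (\<Sum>s\<leftarrow>ts. h (t - s)))" by (simp only: ratio0)
    then have "gf t = S w * (eta + (\<Sum>s\<leftarrow>ts. h (t - s)))" by (simp add: gf_def w_def)
    then show ?thesis using LI Spos[of w] by simp
  qed
  show ?thesis
    by (rule exI[of _ gf]) (use gf_meas gf0 eq haz in \<open>auto simp: D_def l_def\<close>)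
qed

end

theorem theorem1:
  fixes mu :: "ereal measure" and eta :: real and f h :: "real \<Rightarrow> real"
  assumes eta_pos: "eta > 0"
    and mu_prob: "prob_space mu" and mu_sets: "sets mu = sets borel"
    and mu_pos: "emeasure mu {..0} = 0"
    and f_meas: "f \<in> borel_measurable borel" and f_nonneg: "\<And>t. f t \<ge> 0"
    and f_dens: "\<And>t. t > 0 \<Longrightarrow> emeasure mu {..ereal t} = (\<integral>\<^sup>+ s\<in>{0<..t}. ennreal (f s) \<partial>lborel)"
    and h_def: "\<And>t. t > 0 \<Longrightarrow> h t = f t / (1 - measure mu {..ereal t})"
    and h_int: "(\<integral>\<^sup>+ t\<in>{0<..}. ennreal (h t) \<partial>lborel) < 1"
  shows "\<forall>ts. sorted_wrt (<) ts \<and> (\<forall>s\<in>set ts. s > 0) \<longrightarrow>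
           (\<exists>g. g \<in> borel_measurable borel \<and> (\<forall>t. g t \<ge> 0) \<and>
                next_time_law mu eta ts = distr (density lborel (\<lambda>t. ennreal (g t))) borel ereal \<and>
                (\<forall>t > last_time ts.
                   g t / (1 - (LINT s:{last_time ts..t}|lborel. g s))
                   = eta + (\<Sum>s\<leftarrow>ts. h (t - s))))"
proof -
  interpret hsetup mu eta f h by (rule hsetup.intro[OF assms])
  show ?thesis by (intro allI impI main) auto
qed

end
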